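(* Let $M=\{D(c_1;r_1),D(c_2;r_2),D(c_3;r_3)\}$ be a 2-disk system whose centers $c_1,c_2,c_3$ lie on a common line, with Vietoris–Rips scale $\nu_M>0$. Then $\mu_M=\nu_M$; equivalently (for pairwise distinct disks) $\rho_M(\nu_M)\ge0$.
   Context: A 2-disk system is a finite collection of closed disks $D(c_i;r_i)\subset\mathbb R^2$ with $r_i>0$. $\nu_M=\max_{i<j}\|c_i-c_j\|/(r_i+r_j)$ (Vietoris–Rips scale) and $\mu_M=\inf\{\lambda\ge0:\bigcap_i D(c_i;\lambda r_i)\ne\emptyset\}$ (Čech scale). Definition of $d_{ij}$ for two intersecting disks $D_i,D_j$ ($i\ne j$): write $c_j-c_i=(a,b)$, $\mathbf n_{ij}=(-b,a)$; if the boundary circles meet, $d_{ij}$ is the unique common boundary point with $\langle d_{ij}-c_i,\mathbf n_{ij}\rangle\ge0$; otherwise, with $\lambda_0=\|c_i-c_j\|/|r_i-r_j|$, $d_{ij}$ is the unique point of $\partial D(c_i;\lambda_0r_i)\cap\partial D(c_j;\lambda_0r_j)$ (equal to $c_i$ if $c_i=c_j$). $d_{ij}(\lambda)$ is this point for the disks rescaled by $\lambda$, and $\rho_M(\lambda)=\max_{i\ne j}\min_{k\notin\{i,j\}}(\lambda r_k-\|d_{ij}(\lambda)-c_k\|)$ for $\lambda\ge\nu_M$. *)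

theory Defs
  imports "HOL-Analysis.Analysis"
begin

text \<open>A disk system indexed by a finite set I of natural numbers: disk i is
  the closed disk cball (c i) (r i) in the plane real^2.\<close>

definition vr_scale :: "(nat \<Rightarrow> real^2) \<Rightarrow> (nat \<Rightarrow> real) \<Rightarrow> nat set \<Rightarrow> real" where
  "vr_scale c r I = Max {dist (c i) (c j) / (r i + r j) | i j. i \<in> I \<and> j \<in> I \<and> i < j}"

definition cech_scale :: "(nat \<Rightarrow> real^2) \<Rightarrow> (nat \<Rightarrow> real) \<Rightarrow> nat set \<Rightarrow> real" where
  "cech_scale c r I = Inf {t. t \<ge> 0 \<and> (\<Inter>i\<in>I. cball (c i) (t * r i)) \<noteq> {}}"

end

theory Submission
  imports Defs
begin

lemma vr3:
  "vr_scale c r {1,2,3} = max (max (dist (c 1) (c 2) / (r 1 + r 2)) (dist (c 1) (c 3) / (r 1 + r 3))) (dist (c 2) (c 3) / (r 2 + r 3))"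
proof -
  have "{dist (c i) (c j) / (r i + r j) | i j. i \<in> {1,2,3::nat} \<and> j \<in> {1,2,3} \<and> i < j}
     = {dist (c 1) (c 2) / (r 1 + r 2), dist (c 1) (c 3) / (r 1 + r 3), dist (c 2) (c 3) / (r 2 + r 3)}"
    apply (rule equalityI)
     apply auto[1]
    apply (simp only: insert_subset empty_subsetI)
    apply (intro conjI)
      apply (rule CollectI, rule exI[of _ 1], rule exI[of _ 2], simp)
     apply (rule CollectI, rule exI[of _ 1], rule exI[of _ 3], simp)
    apply (rule CollectI, rule exI[of _ 2], rule exI[of _ 3], simp)
    apply (rule TrueI)?
    done
  then show ?thesis unfolding vr_scale_def by (simp add: max.assoc)
qed

theorem mainTheorem8:
  fixes c :: "nat \<Rightarrow> real^2" and r :: "nat \<Rightarrow> real"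
  assumes "\<forall>i\<in>{1,2,3}. r i > 0"
    and "collinear {c 1, c 2, c 3}"
    and "vr_scale c r {1,2,3} > 0"
  shows "cech_scale c r {1,2,3} = vr_scale c r {1,2,3}"
proof -
  define \<nu> where "\<nu> = vr_scale c r {1,2,3}"
  have r1: "r 1 > 0" and r2: "r 2 > 0" and r3: "r 3 > 0" using assms(1) by auto
  have "dist (c 1) (c 2) / (r 1 + r 2) \<le> \<nu>" unfolding \<nu>_def vr3 by simp
  then have b12: "dist (c 1) (c 2) \<le> \<nu> * (r 1 + r 2)"
    using r1 r2 by (simp add: pos_divide_le_eq mult.commute)
  have "dist (c 1) (c 3) / (r 1 + r 3) \<le> \<nu>" unfolding \<nu>_def vr3 by simp
  then have b13: "dist (c 1) (c 3) \<le> \<nu> * (r 1 + r 3)"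
    using r1 r3 by (simp add: pos_divide_le_eq mult.commute)
  have "dist (c 2) (c 3) / (r 2 + r 3) \<le> \<nu>" unfolding \<nu>_def vr3 by simp
  then have b23: "dist (c 2) (c 3) \<le> \<nu> * (r 2 + r 3)"
    using r2 r3 by (simp add: pos_divide_le_eq mult.commute)
  obtain u where u: "\<forall>x\<in>{c 1, c 2, c 3}. \<forall>y\<in>{c 1, c 2, c 3}. \<exists>a. x - y = a *\<^sub>R u"
    using assms(2) unfolding collinear_def by blast
  obtain a2 where a2: "c 2 - c 1 = a2 *\<^sub>R u" using u by blast
  obtain a3 where a3: "c 3 - c 1 = a3 *\<^sub>R u" using u by blast
  define a where "a k = (if k = (2::nat) then a2 else if k = 3 then a3 else 0)" for k
  have ca: "c k = c 1 + a k *\<^sub>R u" if "k \<in> {1,2,3}" for k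
    using that a2 a3 unfolding a_def by (auto simp: algebra_simps)
  define n where "n = norm u"
  have dk: "dist (c i) (c j) = \<bar>a i - a j\<bar> * n" if "i \<in> {1,2,3}" "j \<in> {1,2,3}" for i j
  proof -
    have "c i - c j = (a i - a j) *\<^sub>R u" using ca[OF that(1)] ca[OF that(2)] by (simp add: algebra_simps)
    then show ?thesis by (simp add: dist_norm n_def)
  qed
  define L where "L k = a k * n - \<nu> * r k" for k
  define R where "R k = a k * n + \<nu> * r k" for k
  have nu0: "\<nu> > 0" using assms(3) \<nu>_def by simp
  have dd: "dist (c i) (c j) \<le> \<nu> * (r i + r j)" if "i \<in> {1,2,3}" "j \<in> {1,2,3}" for i j
    using that b12 b13 b23 nu0 r1 r2 r3 by (auto simp: dist_commute add.commute)
  have LR: "L i \<le> R j" if "i \<in> {1,2,3}" "j \<in> {1,2,3}" for i j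
  proof -
    have h: "\<bar>a i - a j\<bar> * n \<le> \<nu> * (r i + r j)"
      using dd[OF that] dk[OF that] by simp
    have "(a i - a j) * n \<le> \<bar>a i - a j\<bar> * n"
      by (rule mult_right_mono) (auto simp: n_def)
    with h show ?thesis unfolding L_def R_def by (simp add: algebra_simps)
  qed
  define x where "x = max (max (L 1) (L 2)) (L 3)"
  define p where "p = c 1 + (x / n) *\<^sub>R u"
  have pin: "dist (c k) p \<le> \<nu> * r k" if k: "k \<in> {1,2,3}" for k
  proof (cases "n = 0")
    case True
    then have "u = 0" using n_def by simp
    then show ?thesis using ca[OF k] p_def r1 r2 r3 assms(3) \<nu>_def k by auto
  next
    case False
    then have npos: "n > 0" using n_def by (simp add: order_le_neq_trans)
    have "c k - p = (a k - x / n) *\<^sub>R u" using ca[OF k] p_def by (simp add: algebra_simps)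
    then have "dist (c k) p = \<bar>a k - x / n\<bar> * n" by (simp add: dist_norm n_def)
    also have "\<dots> = \<bar>(a k - x / n) * n\<bar>" using npos by (simp add: abs_mult)
    also have "\<dots> = \<bar>a k * n - x\<bar>" using npos by (simp add: left_diff_distrib)
    also have "\<dots> \<le> \<nu> * r k"
    proof -
      have "L k \<le> x" using k x_def by auto
      moreover have "x \<le> R k" using LR k x_def by auto
      ultimately show ?thesis unfolding L_def R_def by simp
    qed
    finally show ?thesis .
  qed
  let ?S = "{t. t \<ge> 0 \<and> (\<Inter>i\<in>{1,2,3::nat}. cball (c i) (t * r i)) \<noteq> {}}"
  have "\<nu> \<in> ?S"
  proof -
    have "p \<in> (\<Inter>i\<in>{1,2,3::nat}. cball (c i) (\<nu> * r i))" using pin by auto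
    then show ?thesis using assms(3) \<nu>_def by auto
  qed
  moreover have "\<nu> \<le> t" if "t \<in> ?S" for t
  proof -
    from that obtain q where t0: "t \<ge> 0" and q: "\<And>i. i \<in> {1,2,3::nat} \<Longrightarrow> dist (c i) q \<le> t * r i"
      by (auto simp: eval_nat_numeral) (metis One_nat_def)
    have "dist (c i) (c j) \<le> t * (r i + r j)" if "i \<in> {1,2,3}" "j \<in> {1,2,3}" for i j
      using dist_triangle[of "c i" "c j" q] q[OF that(1)] q[OF that(2)] dist_commute[of "c j" q]
      by (simp add: distrib_left)
    then have "dist (c 1) (c 2) / (r 1 + r 2) \<le> t" "dist (c 1) (c 3) / (r 1 + r 3) \<le> t"
      "dist (c 2) (c 3) / (r 2 + r 3) \<le> t"
      using r1 r2 r3 by (auto simp: pos_divide_le_eq)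
    then show ?thesis unfolding \<nu>_def vr3 by simp
  qed
  ultimately have "Inf ?S = \<nu>" by (intro cInf_eq_minimum) auto
  then show ?thesis unfolding cech_scale_def \<nu>_def by simp
qed

end
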